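(* For integers $m\ge1$, $n\ge1$, let $\Delta_{m,n}$ be the subgraph of the integer lattice graph $\mathbb{Z}^m$ induced by $\{x\in\mathbb{Z}^m: 0\le x_1\le\cdots\le x_m\le n\}$. Then the map $\phi:I_m^{(n)}\to\Delta_{m,n}$, $\phi(\mathbf{x})=(\phi_1(\mathbf{x}),\dots,\phi_m(\mathbf{x}))$ with $\phi_k(\mathbf{x})=\sum_{i=m-k+1}^m\mathbf{x}(i)$, is a graph isomorphism. Consequently $I_m^{(n)}\cong F_m(I_{n+m-1})$.
   Context: $I_m$ is the path graph on vertices $\{0,1,\dots,m\}$ with $i\sim i+1$. $\mathbb{Z}^m$ is the graph on integer points with $x\sim y$ iff $\sum_i|x_i-y_i|=1$. $I_m^{(n)}$ is the $n$th reduced power of $I_m$: vertices are degree-$n$ monomials $\mathbf{x}$ in the vertices of $I_m$, with $\mathbf{x}(i)$ the multiplicity of vertex $i$, two monomials adjacent iff they differ by moving one token along one edge. $F_m(H)$ is the $m$-token graph of $H$: vertices are $m$-element subsets of $V(H)$, adjacent iff their symmetric difference is $\{u,v\}$ for an edge $uv$ of $H$. *)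

theory Defs
  imports Main
begin

definition graph_iso ::
  "'a set \<Rightarrow> ('a \<Rightarrow> 'a \<Rightarrow> bool) \<Rightarrow> 'b set \<Rightarrow> ('b \<Rightarrow> 'b \<Rightarrow> bool) \<Rightarrow> ('a \<Rightarrow> 'b) \<Rightarrow> bool" where
  "graph_iso V E W F f \<longleftrightarrow> bij_betw f V W \<and> (\<forall>x\<in>V. \<forall>y\<in>V. E x y \<longleftrightarrow> F (f x) (f y))"

definition path_V :: "nat \<Rightarrow> nat set" where
  "path_V m = {0..m}"

definition path_E :: "nat \<Rightarrow> nat \<Rightarrow> bool" where
  "path_E i j \<longleftrightarrow> i + 1 = j \<or> j + 1 = i"

text \<open>n-th reduced power of a graph (V,E): degree-n monomials in the vertices,
  represented by their multiplicity functions (zero outside V); adjacent iff one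
  is obtained from the other by moving one token along one edge.\<close>
definition rpow_V :: "'a set \<Rightarrow> nat \<Rightarrow> ('a \<Rightarrow> nat) set" where
  "rpow_V V n = {x. (\<forall>v. v \<notin> V \<longrightarrow> x v = 0) \<and> (\<Sum>v\<in>V. x v) = n}"

definition rpow_E :: "'a set \<Rightarrow> ('a \<Rightarrow> 'a \<Rightarrow> bool) \<Rightarrow> ('a \<Rightarrow> nat) \<Rightarrow> ('a \<Rightarrow> nat) \<Rightarrow> bool" where
  "rpow_E V E x y \<longleftrightarrow>
     (\<exists>u\<in>V. \<exists>v\<in>V. E u v \<and> x u \<ge> 1 \<and> y = x(u := x u - 1, v := x v + 1))"

definition token_V :: "'a set \<Rightarrow> nat \<Rightarrow> 'a set set" where
  "token_V V k = {A. A \<subseteq> V \<and> card A = k}"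

definition token_E :: "('a \<Rightarrow> 'a \<Rightarrow> bool) \<Rightarrow> 'a set \<Rightarrow> 'a set \<Rightarrow> bool" where
  "token_E E A B \<longleftrightarrow> (\<exists>u v. E u v \<and> (A - B) \<union> (B - A) = {u, v})"

definition Zm_V :: "nat \<Rightarrow> (nat \<Rightarrow> int) set" where
  "Zm_V m = {x. \<forall>i. i \<notin> {1..m} \<longrightarrow> x i = 0}"

definition Zm_E :: "nat \<Rightarrow> (nat \<Rightarrow> int) \<Rightarrow> (nat \<Rightarrow> int) \<Rightarrow> bool" where
  "Zm_E m x y \<longleftrightarrow> (\<Sum>i\<in>{1..m}. \<bar>x i - y i\<bar>) = 1"

text \<open>Vertex set of Delta_{m,n}; it is an induced subgraph of Z^m, so its adjacency is Zm_E m.\<close>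
definition Delta_V :: "nat \<Rightarrow> nat \<Rightarrow> (nat \<Rightarrow> int) set" where
  "Delta_V m n = {x \<in> Zm_V m. 0 \<le> x 1 \<and> (\<forall>i. 1 \<le> i \<and> i < m \<longrightarrow> x i \<le> x (i + 1)) \<and> x m \<le> int n}"

definition phi :: "nat \<Rightarrow> (nat \<Rightarrow> nat) \<Rightarrow> (nat \<Rightarrow> int)" where
  "phi m x = (\<lambda>k. if k \<in> {1..m} then int (\<Sum>i\<in>{m - k + 1..m}. x i) else 0)"

end

theory Submission
  imports Defs
begin


definition S :: "nat \<Rightarrow> (nat \<Rightarrow> nat) \<Rightarrow> nat \<Rightarrow> nat" where
  "S m x k = (\<Sum>i\<in>{m-k+1..m}. x i)"

lemma S_0[simp]: "S m x 0 = 0" by (simp add: S_def)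

lemma S_Suc: "k < m \<Longrightarrow> S m x (Suc k) = S m x k + x (m-k)"
proof -
  assume k: "k < m"
  have "{m - Suc k + 1..m} = insert (m-k) {m-k+1..m}" using k by auto
  then show ?thesis unfolding S_def by simp
qed

lemma phi_S: "k \<le> m \<Longrightarrow> phi m x k = int (S m x k)"
proof (cases "k = 0")
  case True then show ?thesis by (simp add: phi_def)
next
  case False
  assume "k \<le> m"
  then have "k \<in> {1..m}" using False by simp
  then show ?thesis unfolding phi_def S_def by (simp only: if_True)
qed

lemma phi_out: "k \<notin> {1..m} \<Longrightarrow> phi m x k = 0"
  unfolding phi_def by (simp only: if_False)

lemma S_m: "S m x m = sum x {1..m}" by (simp add: S_def)

lemma sum0: "sum (x::nat\<Rightarrow>nat) {0..m} = x 0 + sum x {1..m}"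
proof -
  have "sum x {0..m} = x 0 + sum x {Suc 0..m}" by (rule sum.atLeast_Suc_atMost) simp
  then show ?thesis by simp
qed

lemma S_mono: "k \<le> k' \<Longrightarrow> k' \<le> m \<Longrightarrow> S m x k \<le> S m x k'"
  unfolding S_def by (rule sum_mono2) auto

lemma rpowD: "x \<in> rpow_V (path_V m) n \<Longrightarrow> (\<forall>v. v > m \<longrightarrow> x v = 0) \<and> x 0 + S m x m = n"
  by (auto simp: rpow_V_def path_V_def S_m sum0)

lemma rpowI: "(\<forall>v. v > m \<longrightarrow> x v = 0) \<Longrightarrow> x 0 + S m x m = n \<Longrightarrow> x \<in> rpow_V (path_V m) n"
  by (auto simp: rpow_V_def path_V_def S_m sum0)

lemma phi_Delta:
  assumes m: "m \<ge> 1" and x: "x \<in> rpow_V (path_V m) n"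
  shows "phi m x \<in> Delta_V m n"
proof -
  have a: "x 0 + S m x m = n" using rpowD[OF x] by simp
  show ?thesis unfolding Delta_V_def Zm_V_def
  proof (intro CollectI conjI allI impI)
    show "\<And>i. i \<notin> {1..m} \<Longrightarrow> phi m x i = 0" by (rule phi_out)
    show "0 \<le> phi m x 1" by (simp add: phi_def)
    fix i assume "1 \<le> i \<and> i < m"
    then show "phi m x i \<le> phi m x (i+1)" by (simp add: phi_S S_mono)
  next
    show "phi m x m \<le> int n" using a m by (simp add: phi_S)
  qed
qed

lemma S_eq_inj:
  assumes x: "x \<in> rpow_V (path_V m) n" and y: "y \<in> rpow_V (path_V m) n"
    and e: "\<And>k. k \<le> m \<Longrightarrow> S m x k = S m y k"
  shows "x = y"
proof
  fix j
  show "x j = y j"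
  proof (cases "j = 0")
    case True then show ?thesis using rpowD[OF x] rpowD[OF y] e[of m] by simp
  next
    case False
    show ?thesis
    proof (cases "j \<le> m")
      case True
      have "S m x (Suc (m-j)) = S m x (m-j) + x j" using S_Suc[of "m-j" m x] False True by simp
      moreover have "S m y (Suc (m-j)) = S m y (m-j) + y j" using S_Suc[of "m-j" m y] False True by simp
      ultimately show ?thesis using e[of "m-j"] e[of "Suc (m-j)"] False True by simp
    next
      case False then show ?thesis using rpowD[OF x] rpowD[OF y] by simp
    qed
  qed
qed

lemma phi_inj:
  assumes x: "x \<in> rpow_V (path_V m) n" and y: "y \<in> rpow_V (path_V m) n"
    and e: "phi m x = phi m y"
  shows "x = y"
  using S_eq_inj[OF x y] e by (metis phi_S of_nat_eq_iff)

lemma Delta_mono: "y \<in> Delta_V m n \<Longrightarrow> k < m \<Longrightarrow> y k \<le> y (Suc k)"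
  by (cases k) (auto simp: Delta_V_def Zm_V_def)

lemma Delta_nonneg: "y \<in> Delta_V m n \<Longrightarrow> k \<le> m \<Longrightarrow> 0 \<le> y k"
proof (induction k)
  case 0 then show ?case by (simp add: Delta_V_def Zm_V_def)
next
  case (Suc k)
  then show ?case using Delta_mono[of y m n k] by simp
qed

lemma phi_surj:
  assumes m: "m \<ge> 1" and y: "y \<in> Delta_V m n"
  shows "\<exists>x\<in>rpow_V (path_V m) n. phi m x = y"
proof -
  define x where "x j = (if j = 0 then nat (int n - y m) else if j \<le> m then nat (y (m-j+1) - y (m-j)) else 0)" for j
  have Sx: "int (S m x k) = y k" if "k \<le> m" for k
    using that
  proof (induction k)
    case 0 then show ?case using y by (simp add: Delta_V_def Zm_V_def)
  next
    case (Suc k)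
    have "x (m-k) = nat (y (Suc k) - y k)" using Suc.prems by (simp add: x_def Suc_diff_Suc)
    moreover have "y k \<le> y (Suc k)" using Delta_mono[OF y] Suc.prems by simp
    ultimately show ?case using Suc S_Suc[of k m x] by simp
  qed
  have ym: "y m \<le> int n" using y by (simp add: Delta_V_def)
  have xr: "x \<in> rpow_V (path_V m) n"
    apply (rule rpowI)
    using Sx[of m] ym by (auto simp: x_def)
  have "phi m x = y"
  proof
    fix k show "phi m x k = y k"
      using y Sx[of k] by (cases "k \<in> {1..m}") (auto simp: phi_out phi_S Delta_V_def Zm_V_def)
  qed
  then show ?thesis using xr by blast
qed

lemma move_sum:
  assumes "finite R" "u \<noteq> v" "x u \<ge> 1"
  shows "int (sum (x(u := x u - 1, v := x v + 1)) R) = int (sum x R) - of_bool (u \<in> R) + of_bool (v \<in> R)"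
proof -
  have e: "int ((x(u := x u - 1, v := x v + 1)) i) = int (x i) - (if i = u then 1 else 0) + (if i = v then 1 else 0)" for i
    using assms by auto
  have "int (sum (x(u := x u - 1, v := x v + 1)) R) = (\<Sum>i\<in>R. int (x i) - (if i = u then 1 else 0) + (if i = v then 1 else 0))"
    by (simp only: of_nat_sum e)
  also have "\<dots> = (\<Sum>i\<in>R. int (x i)) - (\<Sum>i\<in>R. (if i = u then 1 else 0)) + (\<Sum>i\<in>R. (if i = v then 1 else 0))"
    by (simp add: sum.distrib sum_subtractf)
  also have "\<dots> = int (sum x R) - of_bool (u \<in> R) + of_bool (v \<in> R)"
    using assms(1) by (simp add: sum.delta)
  finally show ?thesis .
qed

lemma move_up:
  assumes "u < m" "x u \<ge> 1" "k \<le> m"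
  shows "int (S m (x(u := x u - 1, Suc u := x (Suc u) + 1)) k) = int (S m x k) + of_bool (k = m - u)"
  unfolding S_def using assms by (subst move_sum) auto

lemma move_down:
  assumes "1 \<le> u" "u \<le> m" "x u \<ge> 1" "k \<le> m"
  shows "int (S m (x(u := x u - 1, u - 1 := x (u - 1) + 1)) k) = int (S m x k) - of_bool (k = m - u + 1)"
  unfolding S_def using assms by (subst move_sum) auto

lemma move_rpow:
  assumes x: "x \<in> rpow_V (path_V m) n" and "u \<le> m" "v \<le> m" "u \<noteq> v" "x u \<ge> 1"
  shows "x(u := x u - 1, v := x v + 1) \<in> rpow_V (path_V m) n"
proof -
  define z where "z = x(u := x u - 1, v := x v + 1)"
  have "int (sum z {0..m}) = int (sum x {0..m}) - of_bool (u \<in> {0..m}) + of_bool (v \<in> {0..m})"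
    unfolding z_def using assms by (intro move_sum) auto
  then have "int (sum z {0..m}) = int (sum x {0..m})" using assms by (simp del: of_nat_sum)
  then have "sum z {0..m} = sum x {0..m}" by (simp only: of_nat_eq_iff)
  then show ?thesis using assms unfolding z_def[symmetric] by (auto simp: rpow_V_def path_V_def z_def)
qed

lemma Zm_E_delta:
  assumes "k0 \<in> {1..m}" "\<And>k. k \<in> {1..m} \<Longrightarrow> \<bar>a k - b k\<bar> = of_bool (k = k0)"
  shows "Zm_E m a b"
proof -
  have "(\<Sum>i\<in>{1..m}. \<bar>a i - b i\<bar>) = (\<Sum>i\<in>{1..m}. if i = k0 then 1 else 0)"
    using assms(2) by (intro sum.cong) auto
  also have "\<dots> = 1" using assms(1) by (simp add: sum.delta)
  finally show ?thesis by (simp add: Zm_E_def)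
qed

lemma edge_fwd:
  assumes x: "x \<in> rpow_V (path_V m) n" and e: "rpow_E (path_V m) path_E x y"
  shows "Zm_E m (phi m x) (phi m y)"
proof -
  obtain u v where uv: "u \<le> m" "v \<le> m" "path_E u v" "x u \<ge> 1" and y: "y = x(u := x u - 1, v := x v + 1)"
    using e by (auto simp: rpow_E_def path_V_def)
  show ?thesis
  proof (cases "v = Suc u")
    case True
    show ?thesis
    proof (rule Zm_E_delta[of "m - u"])
      show "m - u \<in> {1..m}" using uv True by auto
      fix k assume k: "k \<in> {1..m}"
      show "\<bar>phi m x k - phi m y k\<bar> = of_bool (k = m - u)"
        using move_up[of u m x k] k uv True y by (simp add: phi_S)
    qed
  next
    case False
    then have uv2: "u = Suc v" using uv(3) by (simp add: path_E_def)
    then have y2: "y = x(u := x u - 1, u - 1 := x (u - 1) + 1)" using y by simp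
    show ?thesis
    proof (rule Zm_E_delta[of "m - u + 1"])
      show "m - u + 1 \<in> {1..m}" using uv uv2 by auto
      fix k assume k: "k \<in> {1..m}"
      show "\<bar>phi m x k - phi m y k\<bar> = of_bool (k = m - u + 1)"
        using move_down[of u m x k] k uv uv2 y2 by (simp add: phi_S)
    qed
  qed
qed

lemma l1_one:
  fixes d :: "nat \<Rightarrow> int"
  assumes "finite A" "(\<Sum>i\<in>A. \<bar>d i\<bar>) = 1"
  shows "\<exists>k\<in>A. \<bar>d k\<bar> = 1 \<and> (\<forall>i\<in>A-{k}. d i = 0)"
proof -
  obtain k where k: "k \<in> A" "d k \<noteq> 0"
    using assms by (metis (mono_tags, lifting) abs_0 sum.neutral zero_neq_one)
  have s: "(\<Sum>i\<in>A. \<bar>d i\<bar>) = \<bar>d k\<bar> + (\<Sum>i\<in>A-{k}. \<bar>d i\<bar>)"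
    using assms(1) k(1) by (simp add: sum.remove)
  have r: "(\<Sum>i\<in>A-{k}. \<bar>d i\<bar>) \<ge> 0" by (simp add: sum_nonneg)
  have "\<bar>d k\<bar> \<ge> 1" using k(2) by linarith
  then have a: "\<bar>d k\<bar> = 1" and b: "(\<Sum>i\<in>A-{k}. \<bar>d i\<bar>) = 0" using s r assms(2) by linarith+
  have "\<forall>i\<in>A-{k}. \<bar>d i\<bar> = 0" using b assms(1) by (subst (asm) sum_nonneg_eq_0_iff) auto
  then show ?thesis using a k(1) by auto
qed

lemma edge_bwd:
  assumes m: "m \<ge> 1" and x: "x \<in> rpow_V (path_V m) n" and y: "y \<in> rpow_V (path_V m) n"
    and e: "Zm_E m (phi m x) (phi m y)"
  shows "rpow_E (path_V m) path_E x y"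
proof -
  obtain k where k: "k \<in> {1..m}" "\<bar>phi m x k - phi m y k\<bar> = 1"
    and o: "\<And>i. i \<in> {1..m} - {k} \<Longrightarrow> phi m x i - phi m y i = 0"
    using l1_one[of "{1..m}" "\<lambda>i. phi m x i - phi m y i"] e by (auto simp: Zm_E_def)
  have Dy: "phi m y \<in> Delta_V m n" using phi_Delta[OF m y] .
  have xS: "x 0 + S m x m = n" using rpowD[OF x] by simp
  show ?thesis
  proof (cases "phi m y k = phi m x k + 1")
    case True
    define u where "u = m - k"
    have u: "u < m" "m - u = k" "u \<le> m" "Suc u \<le> m" using k by (auto simp: u_def)
    have xu: "x u \<ge> 1"
    proof (cases "k < m")
      case True
      have "S m x (Suc k) = S m x k + x u" using S_Suc[OF True] by (simp add: u_def)
      moreover have "phi m y k \<le> phi m y (Suc k)" using Delta_mono[OF Dy True] .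
      moreover have "phi m y (Suc k) = phi m x (Suc k)" using o[of "Suc k"] True by simp
      ultimately show ?thesis using `phi m y k = phi m x k + 1` k True by (simp add: phi_S)
    next
      case False
      then have "k = m" "u = 0" using k by (auto simp: u_def)
      moreover have "phi m y m \<le> int n" using Dy by (simp add: Delta_V_def)
      ultimately show ?thesis using `phi m y k = phi m x k + 1` xS by (simp add: phi_S)
    qed
    define z where "z = x(u := x u - 1, Suc u := x (Suc u) + 1)"
    have z: "z \<in> rpow_V (path_V m) n" unfolding z_def using move_rpow[OF x] u xu by simp
    have "phi m z = phi m y"
    proof
      fix i show "phi m z i = phi m y i"
      proof (cases "i \<in> {1..m}")
        case True
        then show ?thesis using move_up[of u m x i] u xu o[of i] `phi m y k = phi m x k + 1`
          by (cases "i = k") (auto simp: phi_S z_def)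
      next
        case False then show ?thesis by (simp add: phi_out)
      qed
    qed
    then have "y = z" using phi_inj[OF z y] by simp
    then show ?thesis unfolding rpow_E_def path_V_def path_E_def z_def using u xu
      by (intro bexI[of _ u] bexI[of _ "Suc u"]) auto
  next
    case False
    then have F: "phi m y k = phi m x k - 1" using k(2) by linarith
    define u where "u = m - k + 1"
    have u: "1 \<le> u" "u \<le> m" "m - u + 1 = k" "u - 1 \<le> m" "k - 1 < m" "Suc (k - 1) = k" "m - (k - 1) = u"
      using k by (auto simp: u_def)
    have xu: "x u \<ge> 1"
    proof -
      have "S m x k = S m x (k - 1) + x u" using S_Suc[OF u(5)] u by simp
      moreover have "phi m y (k - 1) \<le> phi m y k" using Delta_mono[OF Dy u(5)] u by simp
      moreover have "phi m y (k - 1) = int (S m x (k - 1))"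
      proof (cases "k - 1 = 0")
        case True then show ?thesis by (simp add: phi_S)
      next
        case False
        then have "k - 1 \<in> {1..m} - {k}" using k by auto
        then have "phi m y (k - 1) = phi m x (k - 1)" using o[of "k - 1"] by simp
        moreover have "k - 1 \<le> m" using k by auto
        ultimately show ?thesis using phi_S[of "k - 1" m x] by simp
      qed
      ultimately show ?thesis using F k by (simp add: phi_S)
    qed
    define z where "z = x(u := x u - 1, u - 1 := x (u - 1) + 1)"
    have z: "z \<in> rpow_V (path_V m) n" unfolding z_def using move_rpow[OF x] u xu by simp
    have "phi m z = phi m y"
    proof
      fix i show "phi m z i = phi m y i"
      proof (cases "i \<in> {1..m}")
        case True
        then show ?thesis using move_down[of u m x i] u xu o[of i] F
          by (cases "i = k") (auto simp: phi_S z_def)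
      next
        case False then show ?thesis by (simp add: phi_out)
      qed
    qed
    then have "y = z" using phi_inj[OF z y] by simp
    then show ?thesis unfolding rpow_E_def path_V_def path_E_def z_def using u xu
      by (intro bexI[of _ u] bexI[of _ "u - 1"]) auto
  qed
qed



definition L :: "nat \<Rightarrow> (nat \<Rightarrow> int) \<Rightarrow> nat list" where
  "L m y = map (\<lambda>j. nat (y (Suc j)) + j) [0..<m]"

definition g :: "nat \<Rightarrow> (nat \<Rightarrow> int) \<Rightarrow> nat set" where
  "g m y = set (L m y)"

lemma L_len[simp]: "length (L m y) = m" by (simp add: L_def)
lemma L_nth: "j < m \<Longrightarrow> L m y ! j = nat (y (Suc j)) + j" by (simp add: L_def)

lemma Delta_mono_le: "y \<in> Delta_V m n \<Longrightarrow> i \<le> j \<Longrightarrow> j \<le> m \<Longrightarrow> y i \<le> y j"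
proof (induction j)
  case 0 then show ?case by simp
next
  case (Suc j)
  then show ?case using Delta_mono[of y m n j] by (cases "i = Suc j") auto
qed

lemma L_sorted: "y \<in> Delta_V m n \<Longrightarrow> sorted_wrt (<) (L m y)"
  unfolding sorted_wrt_iff_nth_less
proof (intro allI impI)
  fix i j assume y: "y \<in> Delta_V m n" and ij: "i < j" "j < length (L m y)"
  then have "y (Suc i) \<le> y (Suc j)" by (intro Delta_mono_le[OF y]) auto
  then show "L m y ! i < L m y ! j" using ij by (simp add: L_nth)
qed

lemma L_distinct: "y \<in> Delta_V m n \<Longrightarrow> distinct (L m y)"
  using L_sorted strict_sorted_iff by blast

lemma g_token: assumes y: "y \<in> Delta_V m n" shows "g m y \<in> token_V (path_V (n + m - 1)) m"
proof -
  have "set (L m y) \<subseteq> {0..n + m - 1}"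
  proof
    fix w assume "w \<in> set (L m y)"
    then obtain j where j: "j < m" "w = nat (y (Suc j)) + j" by (auto simp: L_def)
    have "y (Suc j) \<le> y m" using j by (intro Delta_mono_le[OF y]) auto
    moreover have "y m \<le> int n" using y by (simp add: Delta_V_def)
    ultimately show "w \<in> {0..n + m - 1}" using j by auto
  qed
  moreover have "card (set (L m y)) = m" using L_distinct[OF y] distinct_card by fastforce
  ultimately show ?thesis by (simp add: g_def token_V_def path_V_def)
qed

lemma g_inj: assumes y: "y \<in> Delta_V m n" and y': "y' \<in> Delta_V m n" and e: "g m y = g m y'"
  shows "y = y'"
proof -
  have Le: "L m y = L m y'" using strict_sorted_equal[OF L_sorted[OF y'] L_sorted[OF y]] e by (simp add: g_def)
  show ?thesis
  proof
    fix k show "y k = y' k"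
    proof (cases "k \<in> {1..m}")
      case True
      then have "L m y ! (k - 1) = L m y' ! (k - 1)" using Le by simp
      moreover have "L m y ! (k - 1) = nat (y k) + (k - 1)" "L m y' ! (k - 1) = nat (y' k) + (k - 1)"
        using L_nth[of "k - 1" m] True by auto
      ultimately have "nat (y k) = nat (y' k)" by simp
      moreover have "0 \<le> y k" "0 \<le> y' k" using True Delta_nonneg y y' by auto
      ultimately show ?thesis by simp
    next
      case False then show ?thesis using y y' by (simp add: Delta_V_def Zm_V_def)
    qed
  qed
qed

lemma sorted_nth_ge: "sorted_wrt (<) (xs :: nat list) \<Longrightarrow> i < length xs \<Longrightarrow> i \<le> xs ! i"
proof (induction i)
  case 0 then show ?case by simp
next
  case (Suc i)
  then have "xs ! i < xs ! Suc i" by (intro sorted_wrt_nth_less) auto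
  then show ?case using Suc by simp
qed

lemma g_surj: assumes m: "m \<ge> 1" and A: "A \<in> token_V (path_V (n + m - 1)) m"
  shows "\<exists>y\<in>Delta_V m n. g m y = A"
proof -
  have Af: "A \<subseteq> {0..n + m - 1}" "card A = m" using A by (auto simp: token_V_def path_V_def)
  then have fin: "finite A" using finite_subset by blast
  define xs where "xs = sorted_list_of_set A"
  have xs: "sorted_wrt (<) xs" "set xs = A" "length xs = m"
    using fin Af by (auto simp: xs_def)
  define y where "y k = (if k \<in> {1..m} then int (xs ! (k - 1)) - int (k - 1) else 0)" for k
  have ge: "i < m \<Longrightarrow> i \<le> xs ! i" for i using sorted_nth_ge[OF xs(1)] xs(3) by simp
  have lt: "i < j \<Longrightarrow> j < m \<Longrightarrow> xs ! i < xs ! j" for i j using sorted_wrt_nth_less[OF xs(1)] xs(3) by simp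
  have yD: "y \<in> Delta_V m n" unfolding Delta_V_def Zm_V_def
  proof (intro CollectI conjI allI impI)
    show "\<And>i. i \<notin> {1..m} \<Longrightarrow> y i = 0" unfolding y_def by (simp only: if_False)
    show "0 \<le> y 1" using m by (simp add: y_def)
    fix i assume i: "1 \<le> i \<and> i < m"
    then have "xs ! (i - 1) < xs ! i" using lt[of "i - 1" i] by simp
    then show "y i \<le> y (i + 1)" using i by (simp add: y_def)
  next
    have "xs ! (m - 1) \<in> A" using xs m by (metis diff_less nth_mem zero_less_one less_le_trans)
    then have "xs ! (m - 1) \<le> n + m - 1" using Af by auto
    then show "y m \<le> int n" using m by (simp add: y_def)
  qed
  have "L m y = xs"
  proof (rule nth_equalityI)
    show "length (L m y) = length xs" using xs by simp
    fix j assume "j < length (L m y)"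
    then have j: "j < m" by simp
    then show "L m y ! j = xs ! j" using ge[OF j] by (simp add: L_nth y_def)
  qed
  then show ?thesis using yD xs by (auto simp: g_def)
qed

lemma up:
  assumes y: "y \<in> Delta_V m n" and k: "k \<in> {1..m}" and y2: "y(k := y k + 1) \<in> Delta_V m n"
  shows "L m y ! (k - 1) \<in> g m y \<and> Suc (L m y ! (k - 1)) \<notin> g m y \<and>
         g m (y(k := y k + 1)) = insert (Suc (L m y ! (k - 1))) (g m y - {L m y ! (k - 1)})"
proof -
  define u where "u = L m y ! (k - 1)"
  have k1: "k - 1 < m" "Suc (k - 1) = k" using k by auto
  have yk: "0 \<le> y k" using Delta_nonneg[OF y] k by simp
  have Lu: "L m (y(k := y k + 1)) = (L m y)[k - 1 := Suc u]"
  proof (rule nth_equalityI)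
    show "length (L m (y(k := y k + 1))) = length ((L m y)[k - 1 := Suc u])" by simp
    fix j assume "j < length (L m (y(k := y k + 1)))"
    then have j: "j < m" by simp
    show "L m (y(k := y k + 1)) ! j = (L m y)[k - 1 := Suc u] ! j"
    proof (cases "j = k - 1")
      case True
      then show ?thesis using j k1 yk by (simp add: L_nth u_def nth_list_update)
    next
      case False
      then have "Suc j \<noteq> k" using k1 by auto
      then show ?thesis using j False by (simp add: L_nth nth_list_update)
    qed
  qed
  have uin: "u \<in> g m y" using k1 by (simp add: u_def g_def)
  have nin: "Suc u \<notin> g m y"
  proof
    assume "Suc u \<in> g m y"
    then obtain i where i: "i < m" "L m y ! i = Suc u" by (auto simp: g_def in_set_conv_nth)
    have "i \<noteq> k - 1" using i u_def by auto
    then have "L m (y(k := y k + 1)) ! i = Suc u" "L m (y(k := y k + 1)) ! (k - 1) = Suc u"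
      using Lu i k1 by (auto simp: nth_list_update)
    then have "i = k - 1" using nth_eq_iff_index_eq[OF L_distinct[OF y2], of i "k - 1"] i k1 by simp
    then show False using \<open>i \<noteq> k - 1\<close> by simp
  qed
  have "g m (y(k := y k + 1)) = insert (Suc u) (g m y - {u})"
    unfolding g_def Lu using set_update_distinct[OF L_distinct[OF y], of "k - 1" "Suc u"] k1 u_def by simp
  then show ?thesis using uin nin u_def by simp
qed

lemma Zm_up: "k \<in> {1..m} \<Longrightarrow> Zm_E m y (y(k := y k + 1))"
  by (rule Zm_E_delta[of k]) auto

lemma Zm_sym: "Zm_E m a b \<Longrightarrow> Zm_E m b a"
  unfolding Zm_E_def by (simp add: abs_minus_commute)

lemma tok_sym: assumes "token_E path_E A B" shows "token_E path_E B A"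
proof -
  obtain u v where "path_E u v" "(A - B) \<union> (B - A) = {u, v}" using assms by (auto simp: token_E_def)
  then have "path_E v u" "(B - A) \<union> (A - B) = {v, u}" by (auto simp: path_E_def)
  then show ?thesis unfolding token_E_def by (intro exI[of _ v] exI[of _ u]) simp
qed

lemma tok_of_up:
  assumes "u \<in> A" "Suc u \<notin> A" "B = insert (Suc u) (A - {u})"
  shows "token_E path_E A B"
proof -
  have "(A - B) \<union> (B - A) = {u, Suc u}" using assms by auto
  then show ?thesis unfolding token_E_def path_E_def by (intro exI[of _ u] exI[of _ "Suc u"]) simp
qed

lemma g_edge_fwd:
  assumes y: "y \<in> Delta_V m n" and y': "y' \<in> Delta_V m n" and e: "Zm_E m y y'"
  shows "token_E path_E (g m y) (g m y')"
proof -
  obtain k where k: "k \<in> {1..m}" "\<bar>y k - y' k\<bar> = 1"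
    and o: "\<And>i. i \<in> {1..m} - {k} \<Longrightarrow> y i - y' i = 0"
    using l1_one[of "{1..m}" "\<lambda>i. y i - y' i"] e by (auto simp: Zm_E_def)
  have out: "i \<notin> {1..m} \<Longrightarrow> y i = 0 \<and> y' i = 0" for i using y y' by (simp add: Delta_V_def Zm_V_def)
  show ?thesis
  proof (cases "y' k = y k + 1")
    case True
    have "y' = y(k := y k + 1)"
    proof
      fix i show "y' i = (y(k := y k + 1)) i"
        using True o[of i] out[of i] by (cases "i \<in> {1..m}"; cases "i = k") auto
    qed
    then have D: "y(k := y k + 1) \<in> Delta_V m n" using y' by simp
    show ?thesis using up[OF y k(1) D] \<open>y' = y(k := y k + 1)\<close>
      by (intro tok_of_up[of "L m y ! (k - 1)"]) auto
  next
    case False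
    then have F: "y k = y' k + 1" using k by linarith
    have "y = y'(k := y' k + 1)"
    proof
      fix i show "y i = (y'(k := y' k + 1)) i"
        using F o[of i] out[of i] by (cases "i \<in> {1..m}"; cases "i = k") auto
    qed
    then have D: "y'(k := y' k + 1) \<in> Delta_V m n" using y by simp
    have "token_E path_E (g m y') (g m y)" using up[OF y' k(1) D] \<open>y = y'(k := y' k + 1)\<close>
      by (intro tok_of_up[of "L m y' ! (k - 1)"]) auto
    then show ?thesis by (rule tok_sym)
  qed
qed

lemma key:
  assumes m: "m \<ge> 1" and y: "y \<in> Delta_V m n" and y': "y' \<in> Delta_V m n"
    and u: "u \<in> g m y" "Suc u \<notin> g m y" and B: "g m y' = insert (Suc u) (g m y - {u})"
  shows "Zm_E m y y'"
proof -
  obtain j where j: "j < m" "L m y ! j = u" using u(1) by (auto simp: g_def in_set_conv_nth)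
  define k where "k = Suc j"
  have k: "k \<in> {1..m}" "k - 1 = j" using j by (auto simp: k_def)
  have yk: "0 \<le> y k" using Delta_nonneg[OF y] k by simp
  have uk: "u = nat (y k) + j" using j by (simp add: L_nth k_def)
  define z where "z = y(k := y k + 1)"
  have zD: "z \<in> Delta_V m n" unfolding Delta_V_def Zm_V_def
  proof (intro CollectI conjI allI impI)
    show "\<And>i. i \<notin> {1..m} \<Longrightarrow> z i = 0" using y k unfolding z_def by (auto simp: Delta_V_def Zm_V_def)
    show "0 \<le> z 1" using y yk k unfolding z_def by (auto simp: Delta_V_def)
    fix i assume i: "1 \<le> i \<and> i < m"
    show "z i \<le> z (i + 1)"
    proof (cases "i = k")
      case True
      have "L m y ! j < L m y ! k" using sorted_wrt_nth_less[OF L_sorted[OF y], of j k] i True by (simp add: k_def)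
      moreover have "L m y ! k \<in> set (L m y)" using i True by simp
      then have "L m y ! k \<noteq> Suc u" using u(2) unfolding g_def by metis
      moreover have "L m y ! k = nat (y (Suc k)) + k" using i True by (simp add: L_nth)
      moreover have "0 \<le> y (Suc k)" using Delta_nonneg[OF y] i True by simp
      ultimately show ?thesis using True j uk yk by (simp add: z_def k_def)
    next
      case False
      then show ?thesis using Delta_mono[OF y, of i] i by (auto simp: z_def)
    qed
  next
    show "z m \<le> int n"
    proof (cases "k = m")
      case True
      have "g m y' \<subseteq> {0..n + m - 1}" using g_token[OF y'] by (simp add: token_V_def path_V_def)
      then have "Suc u \<le> n + m - 1" using B by auto
      then show ?thesis using True uk k yk by (simp add: z_def)
    next
      case False then show ?thesis using y by (simp add: z_def Delta_V_def)
    qed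
  qed
  have "g m z = g m y'" using up[OF y k(1)] zD B k j unfolding z_def by simp
  then have "z = y'" using g_inj[OF zD y'] by simp
  then show ?thesis using Zm_up[OF k(1), of y] z_def by simp
qed

lemma g_edge_bwd:
  assumes m: "m \<ge> 1" and y: "y \<in> Delta_V m n" and y': "y' \<in> Delta_V m n"
    and e: "token_E path_E (g m y) (g m y')"
  shows "Zm_E m y y'"
proof -
  define A where "A = g m y"
  define B where "B = g m y'"
  have fA: "finite A" "card A = m" using g_token[OF y] unfolding A_def token_V_def path_V_def
    by (auto intro: finite_subset)
  have fB: "finite B" "card B = m" using g_token[OF y'] unfolding B_def token_V_def path_V_def
    by (auto intro: finite_subset)
  obtain u v where uv: "path_E u v" "(A - B) \<union> (B - A) = {u, v}"
    using e unfolding token_E_def A_def B_def by blast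
  have "u \<noteq> v" using uv(1) by (auto simp: path_E_def)
  have c1: "card (A - B) = card (B - A)"
    using fA fB card_Diff_subset_Int[of A B] card_Diff_subset_Int[of B A] by (simp add: Int_commute)
  have "card ((A - B) \<union> (B - A)) = card (A - B) + card (B - A)"
    using fA fB by (intro card_Un_disjoint) auto
  then have "card (A - B) + card (B - A) = 2" using uv(2) \<open>u \<noteq> v\<close> by simp
  then have "card (A - B) = 1" "card (B - A) = 1" using c1 by auto
  then obtain p q where p: "A - B = {p}" and q: "B - A = {q}" by (meson card_1_singletonE)
  have "{p, q} = {u, v}" using uv(2) p q by (simp add: insert_commute)
  then have pq: "path_E p q" using uv(1) by (auto simp: doubleton_eq_iff path_E_def)
  have pA: "p \<in> A" "p \<notin> B" "q \<in> B" "q \<notin> A" using p q by auto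
  have BA: "B = insert q (A - {p})" using p q by blast
  have AB: "A = insert p (B - {q})" using p q by blast
  show ?thesis
  proof (cases "q = Suc p")
    case True
    show ?thesis using key[OF m y y', of p] pA BA True unfolding A_def B_def by simp
  next
    case False
    then have "p = Suc q" using pq by (auto simp: path_E_def)
    then have "Zm_E m y' y" using key[OF m y' y, of q] pA AB unfolding A_def B_def by simp
    then show ?thesis by (rule Zm_sym)
  qed
qed

lemma iso_comp:
  assumes "graph_iso V E W F f" "graph_iso W F X G h"
  shows "graph_iso V E X G (h \<circ> f)"
proof -
  have b: "bij_betw (h \<circ> f) V X" using assms bij_betw_trans unfolding graph_iso_def by blast
  have "\<forall>x\<in>V. \<forall>y\<in>V. E x y \<longleftrightarrow> G ((h \<circ> f) x) ((h \<circ> f) y)"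
  proof (intro ballI)
    fix x y assume "x \<in> V" "y \<in> V"
    moreover then have "f x \<in> W" "f y \<in> W" using assms(1) unfolding graph_iso_def
      by (auto intro: bij_betw_apply)
    ultimately show "E x y \<longleftrightarrow> G ((h \<circ> f) x) ((h \<circ> f) y)" using assms unfolding graph_iso_def by simp
  qed
  then show ?thesis using b unfolding graph_iso_def by blast
qed

theorem mainTheorem9:
  fixes m n :: nat
  assumes "m \<ge> 1" and "n \<ge> 1"
  shows "graph_iso (rpow_V (path_V m) n) (rpow_E (path_V m) path_E)
                   (Delta_V m n) (Zm_E m) (phi m)
       \<and> (\<exists>f :: (nat \<Rightarrow> nat) \<Rightarrow> nat set.
            graph_iso (rpow_V (path_V m) n) (rpow_E (path_V m) path_E)
                      (token_V (path_V (n + m - 1)) m) (token_E path_E) f)"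
proof -
  have b1: "bij_betw (phi m) (rpow_V (path_V m) n) (Delta_V m n)"
    unfolding bij_betw_def
  proof
    show "inj_on (phi m) (rpow_V (path_V m) n)" using phi_inj by (meson inj_onI)
    show "phi m ` rpow_V (path_V m) n = Delta_V m n"
      using phi_Delta[OF assms(1)] phi_surj[OF assms(1)] by blast
  qed
  have I1: "graph_iso (rpow_V (path_V m) n) (rpow_E (path_V m) path_E) (Delta_V m n) (Zm_E m) (phi m)"
    unfolding graph_iso_def using b1 edge_fwd edge_bwd[OF assms(1)] by blast
  have b2: "bij_betw (g m) (Delta_V m n) (token_V (path_V (n + m - 1)) m)"
    unfolding bij_betw_def
  proof
    show "inj_on (g m) (Delta_V m n)" using g_inj by (meson inj_onI)
    show "g m ` Delta_V m n = token_V (path_V (n + m - 1)) m"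
      using g_token g_surj[OF assms(1)] by blast
  qed
  have I2: "graph_iso (Delta_V m n) (Zm_E m) (token_V (path_V (n + m - 1)) m) (token_E path_E) (g m)"
    unfolding graph_iso_def using b2 g_edge_fwd g_edge_bwd[OF assms(1)] by blast
  show ?thesis using I1 iso_comp[OF I1 I2] by blast
qed

end
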